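(* Let $\{A^i\}_{i=1}^N$ be complex $2n\times2n$ matrices. Suppose there are unitaries $W,\tilde W\in\mathrm U(2n)$ and tuples $\{B^i\}_i,\{\tilde B^i\}_i$ of complex $n\times n$ matrices such that $A^i=W(\sigma_x^{|i|}\otimes B^i)W^\dagger=\tilde W(\sigma_x^{|i|}\otimes\tilde B^i)\tilde W^\dagger$ for all $i$, and such that for each of the tuples $\{B^i\}$ and $\{\tilde B^i\}$ both the span of all products of even total parity (products $B^{i_1}\cdots B^{i_l}$ with $l\in\mathbb N$ arbitrary and $\sum_k|i_k|$ even) and the span of all products of odd total parity equal $\mathrm M_n(\mathbb C)$. Then $\tilde W(\sigma_x\otimes1_n)\tilde W^\dagger=\pm\,W(\sigma_x\otimes1_n)W^\dagger$.
   Context: $i\mapsto|i|\in\{0,1\}$ is a fixed parity function on $\{1,\dots,N\}$; $\sigma_x$ is the Pauli $x$-matrix. The matrix $u=W(\sigma_x\otimes1_n)W^\dagger$ is called the Wall matrix of the graded irreducible fMPS $\{A^i\}$ with Wall invariant $(-)$. *)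

theory Defs
  imports "HOL-Analysis.Analysis"
begin

text \<open>The 2n x 2n matrices are
indexed by bool x 'n, so that the tensor product sigma_x (x) B is the
Kronecker product with the first (2-dimensional) factor outermost.\<close>

type_synonym 'n cmat = "complex ^ 'n ^ 'n"

definition cadj :: "('n::finite) cmat \<Rightarrow> 'n cmat" where
  "cadj M = (\<chi> i j. cnj (M $ j $ i))"

definition unitary :: "('n::finite) cmat \<Rightarrow> bool" where
  "unitary U \<longleftrightarrow> cadj U ** U = mat 1 \<and> U ** cadj U = mat 1"

definition sigma_x :: "bool cmat" where
  "sigma_x = (\<chi> a b. if a \<noteq> b then 1 else 0)"

definition kron :: "('a::finite) cmat \<Rightarrow> ('b::finite) cmat \<Rightarrow> ('a \<times> 'b) cmat" where
  "kron M N = (\<chi> r c. M $ fst r $ fst c * N $ snd r $ snd c)"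

text \<open>sigma_x to the power |i| where |i| is given as a boolean parity (True = 1).\<close>
definition sigma_x_pow :: "bool \<Rightarrow> bool cmat" where
  "sigma_x_pow p = (if p then sigma_x else mat 1)"

definition cscale :: "complex \<Rightarrow> ('n::finite) cmat \<Rightarrow> 'n cmat" where
  "cscale c M = (\<chi> i j. c * M $ i $ j)"

definition cspan :: "('n::finite) cmat set \<Rightarrow> 'n cmat set" where
  "cspan S = {M. \<exists>F c. finite F \<and> F \<subseteq> S \<and> M = (\<Sum>X\<in>F. cscale (c X) X)}"

definition word_prod :: "(nat \<Rightarrow> ('n::finite) cmat) \<Rightarrow> nat list \<Rightarrow> 'n cmat" where
  "word_prod B is = foldr (\<lambda>i M. B i ** M) is (mat 1)"

definition word_parity :: "(nat \<Rightarrow> bool) \<Rightarrow> nat list \<Rightarrow> nat" where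
  "word_parity par is = sum_list (map (\<lambda>i. of_bool (par i)) is)"

definition graded_products ::
  "nat \<Rightarrow> (nat \<Rightarrow> bool) \<Rightarrow> (nat \<Rightarrow> ('n::finite) cmat) \<Rightarrow> bool \<Rightarrow> 'n cmat set" where
  "graded_products N par B od =
     {word_prod B is | is. set is \<subseteq> {1..N} \<and> odd (word_parity par is) = od}"

end

theory Submission
  imports Defs
begin

lemma kron_mult:
  fixes A C :: "('a::finite) cmat" and B D :: "('b::finite) cmat"
  shows "kron A B ** kron C D = kron (A ** C) (B ** D)"
proof -
  have "\<And>r c. (\<Sum>k\<in>(UNIV::('a\<times>'b) set). A $ fst r $ fst k * B $ snd r $ snd k * (C $ fst k $ fst c * D $ snd k $ snd c))
     = (\<Sum>k1\<in>UNIV. A $ fst r $ k1 * C $ k1 $ fst c) * (\<Sum>k2\<in>UNIV. B $ snd r $ k2 * D $ k2 $ snd c)"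
    apply (simp only: sum_product UNIV_Times_UNIV[symmetric] sum.cartesian_product)
    apply (rule sum.cong, simp)
    apply (auto simp: mult_ac)
    done
  then show ?thesis by (simp add: kron_def matrix_matrix_mult_def vec_eq_iff)
qed

lemma kron_one: "kron (mat 1 :: ('a::finite) cmat) (mat 1 :: ('b::finite) cmat) = mat 1"
  by (auto simp: kron_def mat_def vec_eq_iff prod_eq_iff)

lemma matrix_add_rdistrib: "((B + C) ** A) = (B ** A) + (C ** A)"
  by (vector matrix_matrix_mult_def sum.distrib[symmetric] field_simps)

lemma cscale_mult_l: "cscale c (M::('n::finite) cmat) ** X = cscale c (M ** X)"
  by (simp add: cscale_def matrix_matrix_mult_def vec_eq_iff sum_distrib_left mult_ac)
lemma cscale_mult_r: "X ** cscale c (M::('n::finite) cmat) = cscale c (X ** M)"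
  by (simp add: cscale_def matrix_matrix_mult_def vec_eq_iff sum_distrib_left mult_ac)

lemma neg_mult_r: "X ** (- (M::('n::finite) cmat)) = - (X ** M)"
  by (simp add: matrix_matrix_mult_def vec_eq_iff sum_negf)
lemma neg_mult_l: "(- (M::('n::finite) cmat)) ** X = - (M ** X)"
  by (simp add: matrix_matrix_mult_def vec_eq_iff sum_negf)

lemma kron_neg: "kron (- A) (B::('b::finite) cmat) = - kron (A::('a::finite) cmat) B"
  by (simp add: kron_def vec_eq_iff)

lemma kron_cscale: "kron P (cscale c X) = cscale c (kron (P::('a::finite) cmat) (X::('b::finite) cmat))"
  by (simp add: kron_def cscale_def vec_eq_iff mult_ac)

lemma kron_add: "kron P (X + Y) = kron (P::('a::finite) cmat) (X::('b::finite) cmat) + kron P Y"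
  by (simp add: kron_def vec_eq_iff algebra_simps)

lemma kron_zero: "kron P 0 = (0::(('a::finite)\<times>('b::finite)) cmat)"
  by (simp add: kron_def vec_eq_iff)

lemma sigma_sq: "sigma_x ** sigma_x = mat 1"
  by (auto simp: sigma_x_def matrix_matrix_mult_def mat_def vec_eq_iff UNIV_bool)

lemma sigma_pow_mult: "sigma_x_pow a ** sigma_x_pow b = sigma_x_pow (a \<noteq> b)"
  by (auto simp: sigma_x_pow_def sigma_sq)

lemma sigma_pow_comm: "sigma_x_pow a ** sigma_x = sigma_x ** sigma_x_pow a"
  by (auto simp: sigma_x_pow_def)

definition comm :: "('n::finite) cmat \<Rightarrow> 'n cmat \<Rightarrow> bool" where
  "comm u M \<longleftrightarrow> M ** u = u ** M"

lemma comm_word: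
  assumes "\<forall>i\<in>set w. comm u (C i)"
  shows "comm u (word_prod C w)"
  using assms
proof (induction w)
  case Nil
  then show ?case by (simp add: comm_def word_prod_def)
next
  case (Cons a w)
  then have h1: "C a ** u = u ** C a" and h2: "word_prod C w ** u = u ** word_prod C w"
    by (auto simp: comm_def)
  have "C a ** word_prod C w ** u = C a ** (u ** word_prod C w)"
    using h2 by (simp add: matrix_mul_assoc[symmetric])
  also have "\<dots> = u ** (C a ** word_prod C w)"
    using h1 by (simp add: matrix_mul_assoc)
  finally show ?case by (simp add: comm_def word_prod_def matrix_mul_assoc)
qed

lemma word_prod_kron:
  "word_prod (\<lambda>i. kron (sigma_x_pow (par i)) (B i)) w
   = kron (sigma_x_pow (odd (word_parity par w))) (word_prod (B::nat \<Rightarrow> ('n::finite) cmat) w)"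
proof (induction w)
  case Nil
  then show ?case by (simp add: word_prod_def word_parity_def sigma_x_pow_def kron_one)
next
  case (Cons a w)
  have p: "odd (word_parity par (a # w)) = (par a \<noteq> odd (word_parity par w))"
    by (simp add: word_parity_def)
  have "word_prod (\<lambda>i. kron (sigma_x_pow (par i)) (B i)) (a # w)
     = kron (sigma_x_pow (par a)) (B a) ** word_prod (\<lambda>i. kron (sigma_x_pow (par i)) (B i)) w"
    by (simp add: word_prod_def)
  also have "\<dots> = kron (sigma_x_pow (par a) ** sigma_x_pow (odd (word_parity par w))) (B a ** word_prod B w)"
    using Cons by (simp add: kron_mult)
  finally show ?case by (simp add: sigma_pow_mult p word_prod_def)
qed

lemma comm_sum:
  assumes "finite F" "\<forall>X\<in>F. comm u (kron P X)"
  shows "comm u (kron (P::('a::finite) cmat) (\<Sum>X\<in>F. cscale (c X) (X::('b::finite) cmat)))"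
  using assms
proof (induction F rule: finite_induct)
  case empty
  then show ?case by (simp add: comm_def kron_zero)
next
  case (insert x F)
  then have h1: "kron P x ** u = u ** kron P x"
    and h2: "kron P (\<Sum>X\<in>F. cscale (c X) X) ** u = u ** kron P (\<Sum>X\<in>F. cscale (c X) X)"
    by (auto simp: comm_def)
  show ?case using insert h1 h2
    by (simp add: comm_def kron_add kron_cscale matrix_add_rdistrib matrix_add_ldistrib
        cscale_mult_l cscale_mult_r)
qed

lemma comm_span:
  assumes "\<forall>X\<in>S. comm u (kron P X)" "M \<in> cspan S"
  shows "comm u (kron (P::('a::finite) cmat) (M::('b::finite) cmat))"
proof -
  obtain F c where "finite F" "F \<subseteq> S" "M = (\<Sum>X\<in>F. cscale (c X) X)"
    using assms(2) by (auto simp: cspan_def)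
  then show ?thesis using comm_sum[of F u P c] assms(1) by auto
qed

definition munit :: "'n \<Rightarrow> 'n \<Rightarrow> ('n::finite) cmat" where
  "munit k l = (\<chi> a b. if a = k \<and> b = l then 1 else 0)"

lemma munit_left:
  "(kron (mat 1) (munit k l) ** u) $ (p,i) $ (q,j) = (if i = k then u $ (p,l) $ (q,j) else 0)"
proof -
  have "(kron (mat 1) (munit k l) ** u) $ (p,i) $ (q,j)
      = (\<Sum>r\<in>UNIV. if r = (p,l) then (if i = k then u $ (p,l) $ (q,j) else 0) else 0)"
    unfolding matrix_matrix_mult_def kron_def mat_def munit_def
    apply (simp only: vec_lambda_beta)
    apply (rule sum.cong[OF refl])
    apply auto
    done
  then show ?thesis by simp
qed

lemma munit_right:
  "(u ** kron (mat 1) (munit k l)) $ (p,i) $ (q,j) = (if j = l then u $ (p,i) $ (q,k) else 0)"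
proof -
  have "(u ** kron (mat 1) (munit k l)) $ (p,i) $ (q,j)
      = (\<Sum>r\<in>UNIV. if r = (q,k) then (if j = l then u $ (p,i) $ (q,k) else 0) else 0)"
    unfolding matrix_matrix_mult_def kron_def mat_def munit_def
    apply (simp only: vec_lambda_beta)
    apply (rule sum.cong[OF refl])
    apply auto
    done
  then show ?thesis by simp
qed

lemma kron_inj:
  assumes "kron A (mat 1 :: ('n::finite) cmat) = kron B (mat 1 :: 'n cmat)"
  shows "A = (B::('a::finite) cmat)"
proof -
  have "\<And>p q. A $ p $ q = B $ p $ q"
  proof -
    fix p q
    have "kron A (mat 1 :: 'n cmat) $ (p,undefined) $ (q,undefined) = kron B (mat 1 :: 'n cmat) $ (p,undefined) $ (q,undefined)"
      using assms by simp
    then show "A $ p $ q = B $ p $ q" by (simp add: kron_def mat_def)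
  qed
  then show ?thesis by (simp add: vec_eq_iff)
qed

lemma two_by_two:
  fixes m :: "bool cmat"
  assumes "sigma_x ** m = m ** sigma_x" "m ** m = mat 1" "m \<noteq> mat 1" "m \<noteq> - mat 1"
  shows "m = sigma_x \<or> m = - sigma_x"
proof -
  have c: "\<And>p q. m $ (\<not>p) $ q = m $ p $ (\<not>q)"
  proof -
    fix p q
    have "(sigma_x ** m) $ p $ q = (m ** sigma_x) $ p $ q" using assms(1) by simp
    then show "m $ (\<not>p) $ q = m $ p $ (\<not>q)"
      by (cases p; cases q; simp add: matrix_matrix_mult_def sigma_x_def UNIV_bool)
  qed
  define a where "a = m $ True $ True"
  define b where "b = m $ True $ False"
  have mFT: "m $ False $ True = b" using c[of True True] by (simp add: b_def)
  have mFF: "m $ False $ False = a" using c[of True False] by (simp add: a_def)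
  have s1: "a * a + b * b = 1"
    using arg_cong[OF assms(2), of "\<lambda>M. M $ True $ True"]
    by (simp add: matrix_matrix_mult_def UNIV_bool mat_def a_def[symmetric] b_def[symmetric] mFT add.commute)
  have s2: "a * b + b * a = 0"
    using arg_cong[OF assms(2), of "\<lambda>M. M $ True $ False"]
    by (simp add: matrix_matrix_mult_def UNIV_bool mat_def a_def[symmetric] b_def[symmetric] mFF)
  have mform: "m = (\<chi> p q. if p = q then a else b)"
  proof -
    have "\<And>p q. m $ p $ q = (if p = q then a else b)"
    proof -
      fix p q show "m $ p $ q = (if p = q then a else b)"
        by (cases p; cases q; simp add: a_def[symmetric] b_def[symmetric] mFT mFF)
    qed
    then show ?thesis by (simp add: vec_eq_iff)
  qed
  have "a = 0 \<or> b = 0" using s2 by (simp add: mult.commute)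
  then show ?thesis
  proof
    assume "b = 0"
    then have "a * a = 1" using s1 by simp
    then have "a = 1 \<or> a = -1" by (simp add: square_eq_1_iff)
    then have "m = mat 1 \<or> m = - mat 1" using mform \<open>b = 0\<close>
      by (auto simp: vec_eq_iff mat_def)
    then show ?thesis using assms by auto
  next
    assume "a = 0"
    then have "b * b = 1" using s1 by simp
    then have "b = 1 \<or> b = -1" by (simp add: square_eq_1_iff)
    then show ?thesis using mform \<open>a = 0\<close>
      by (auto simp: vec_eq_iff sigma_x_def)
  qed
qed

theorem mainTheorem8:
  fixes N :: nat
    and par :: "nat \<Rightarrow> bool"
    and A :: "nat \<Rightarrow> (bool \<times> 'n::finite) cmat"
    and W Wt :: "(bool \<times> 'n) cmat"
    and B Bt :: "nat \<Rightarrow> 'n cmat"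
  assumes "unitary W" and "unitary Wt"
    and "\<forall>i\<in>{1..N}. A i = W ** kron (sigma_x_pow (par i)) (B i) ** cadj W"
    and "\<forall>i\<in>{1..N}. A i = Wt ** kron (sigma_x_pow (par i)) (Bt i) ** cadj Wt"
    and "cspan (graded_products N par B False) = UNIV"
    and "cspan (graded_products N par B True) = UNIV"
    and "cspan (graded_products N par Bt False) = UNIV"
    and "cspan (graded_products N par Bt True) = UNIV"
  shows "Wt ** kron sigma_x (mat 1) ** cadj Wt = W ** kron sigma_x (mat 1) ** cadj W
       \<or> Wt ** kron sigma_x (mat 1) ** cadj Wt = - (W ** kron sigma_x (mat 1) ** cadj W)"
proof -
  define Z where "Z = kron sigma_x (mat 1 :: 'n cmat)"
  define V where "V = cadj W ** Wt"
  define Vh where "Vh = cadj Wt ** W"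
  define C where "C = (\<lambda>i. kron (sigma_x_pow (par i)) (B i))"
  define Ct where "Ct = (\<lambda>i. kron (sigma_x_pow (par i)) (Bt i))"
  have uW: "cadj W ** W = mat 1" "W ** cadj W = mat 1" using assms(1) by (auto simp: unitary_def)
  have uWt: "cadj Wt ** Wt = mat 1" "Wt ** cadj Wt = mat 1" using assms(2) by (auto simp: unitary_def)
  have VVh: "V ** Vh = mat 1"
  proof -
    have "V ** Vh = cadj W ** ((Wt ** cadj Wt) ** W)" by (simp add: V_def Vh_def matrix_mul_assoc)
    then show ?thesis using uW uWt by simp
  qed
  have VhV: "Vh ** V = mat 1"
  proof -
    have "Vh ** V = cadj Wt ** ((W ** cadj W) ** Wt)" by (simp add: V_def Vh_def matrix_mul_assoc)
    then show ?thesis using uW uWt by simp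
  qed
  have ZZ: "Z ** Z = mat 1" by (simp add: Z_def kron_mult sigma_sq kron_one)
  have CV: "C i = V ** Ct i ** Vh" if "i \<in> {1..N}" for i
  proof -
    have e: "W ** C i ** cadj W = Wt ** Ct i ** cadj Wt"
      using assms(3,4) that by (simp add: C_def Ct_def)
    have "C i = cadj W ** (W ** C i ** cadj W) ** W"
      by (simp add: matrix_mul_assoc) (simp add: matrix_mul_assoc[symmetric] uW)
    also have "\<dots> = cadj W ** (Wt ** Ct i ** cadj Wt) ** W" using e by simp
    also have "\<dots> = V ** Ct i ** Vh" by (simp add: V_def Vh_def matrix_mul_assoc)
    finally show ?thesis .
  qed
  have CtZ: "Ct i ** Z = Z ** Ct i" for i
    by (simp add: Ct_def Z_def kron_mult sigma_pow_comm)
  define u where "u = V ** Z ** Vh"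
  have commC: "comm u (C i)" if "i \<in> {1..N}" for i
  proof -
    have "C i ** u = V ** (Ct i ** (Vh ** V) ** Z) ** Vh"
      using CV[OF that] by (simp add: u_def matrix_mul_assoc)
    also have "\<dots> = V ** (Z ** Ct i) ** Vh" using VhV CtZ by simp
    also have "\<dots> = V ** (Z ** (Vh ** V) ** Ct i) ** Vh" using VhV by simp
    also have "\<dots> = u ** C i" using CV[OF that] by (simp add: u_def matrix_mul_assoc)
    finally show ?thesis by (simp add: comm_def)
  qed
  have commW: "comm u (word_prod C w)" if "set w \<subseteq> {1..N}" for w
    using that commC by (intro comm_word) auto
  have even: "\<forall>X\<in>graded_products N par B False. comm u (kron (mat 1) X)"
  proof
    fix X assume "X \<in> graded_products N par B False"
    then obtain w where w: "X = word_prod B w" "set w \<subseteq> {1..N}" "\<not> odd (word_parity par w)"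
      by (auto simp: graded_products_def)
    have "word_prod C w = kron (mat 1) X"
      using word_prod_kron[of par B w] w by (simp add: C_def sigma_x_pow_def)
    then show "comm u (kron (mat 1) X)" using commW[OF w(2)] by simp
  qed
  have odd: "\<forall>X\<in>graded_products N par B True. comm u (kron sigma_x X)"
  proof
    fix X assume "X \<in> graded_products N par B True"
    then obtain w where w: "X = word_prod B w" "set w \<subseteq> {1..N}" "odd (word_parity par w)"
      by (auto simp: graded_products_def)
    have "word_prod C w = kron sigma_x X"
      using word_prod_kron[of par B w] w by (simp add: C_def sigma_x_pow_def)
    then show "comm u (kron sigma_x X)" using commW[OF w(2)] by simp
  qed
  have cE: "comm u (kron (mat 1) (munit k l))" for k l
    using comm_span[OF even] assms(5) by simp
  have cZ: "comm u Z"
    using comm_span[OF odd] assms(6) by (simp add: Z_def)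
  define k0 where "k0 = (undefined :: 'n)"
  define m where "m = (\<chi> p q. u $ (p,k0) $ (q,k0))"
  have eqE: "(if i = k then u $ (p,l) $ (q,j) else 0) = (if j = l then u $ (p,i) $ (q,k) else 0)"
    for p q i j k l
    using arg_cong[OF cE[of k l, unfolded comm_def], of "\<lambda>M. M $ (p,i) $ (q,j)"]
    by (simp only: munit_left munit_right)
  have um: "u = kron m (mat 1)"
  proof -
    have "u $ (p,i) $ (q,j) = kron m (mat 1) $ (p,i) $ (q,j)" for p q i j
    proof (cases "i = j")
      case True
      then show ?thesis using eqE[where p=p and q=q and i=i and k=i and j=k0 and l=k0] by (simp add: kron_def mat_def m_def)
    next
      case False
      then show ?thesis using eqE[where p=p and q=q and i=i and k=i and j=j and l=i] by (simp add: kron_def mat_def m_def)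
    qed
    then show ?thesis by (simp add: vec_eq_iff)
  qed
  have m1: "sigma_x ** m = m ** sigma_x"
  proof -
    have "kron (sigma_x ** m) (mat 1 :: 'n cmat) = kron (m ** sigma_x) (mat 1 :: 'n cmat)"
      using cZ unfolding comm_def um Z_def by (simp add: kron_mult)
    then show ?thesis by (rule kron_inj)
  qed
  have uu: "u ** u = mat 1"
  proof -
    have "u ** u = V ** (Z ** (Vh ** V) ** Z) ** Vh" by (simp add: u_def matrix_mul_assoc)
    then show ?thesis using VhV ZZ VVh by simp
  qed
  have m2: "m ** m = mat 1"
  proof -
    have "kron (m ** m) (mat 1 :: 'n cmat) = kron (mat 1) (mat 1 :: 'n cmat)"
      using uu unfolding um by (simp add: kron_mult kron_one)
    then show ?thesis by (rule kron_inj)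
  qed
  have Zu: "Z = Vh ** u ** V"
  proof -
    have "Vh ** u ** V = (Vh ** V) ** Z ** (Vh ** V)" by (simp add: u_def matrix_mul_assoc)
    then show ?thesis using VhV by simp
  qed
  have Z0: "Z $ (True,k0) $ (True,k0) = 0" by (simp add: Z_def kron_def sigma_x_def)
  have m3: "m \<noteq> mat 1"
  proof
    assume "m = mat 1"
    then have "u = mat 1" using um kron_one by simp
    then have "Z = mat 1" using Zu VhV by simp
    then show False using Z0 by (simp add: mat_def)
  qed
  have m4: "m \<noteq> - mat 1"
  proof
    assume "m = - mat 1"
    then have "u = - mat 1" using um kron_one kron_neg by metis
    then have "Z = - mat 1" using Zu VhV by (simp add: neg_mult_l neg_mult_r)
    then show False using Z0 by (simp add: mat_def)
  qed
  have "u = Z \<or> u = - Z"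
    using two_by_two[OF m1 m2 m3 m4] um by (auto simp: Z_def kron_neg)
  moreover have "Wt ** Z ** cadj Wt = W ** u ** cadj W"
  proof -
    have "W ** u ** cadj W = (W ** cadj W) ** Wt ** Z ** cadj Wt ** (W ** cadj W)"
      by (simp add: u_def V_def Vh_def matrix_mul_assoc)
    then show ?thesis using uW by simp
  qed
  ultimately show ?thesis unfolding Z_def
    by (auto simp: neg_mult_l neg_mult_r)
qed

end
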